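(* Let $G$ be a group with a finite generating set $S$, let $X=\mathrm{Cay}(G,S)$, and let $B_X(n)$ be the ball of radius $n$ around the identity in $X$. Suppose there are real numbers $c,k$ such that $|B_X(n)|< c\,n^k$ for every positive integer $n$. Then $\mathrm{pdim}(G)\leq k$.
   Context: For a group $G$, $\mathcal M(G)$ denotes the set of symmetric probability measures $\mu$ on $G$, i.e. $\mu(g)=\mu(g^{-1})$ for all $g$. For $\mu\in\mathcal M(G)$ and $\lambda>0$, $G^\mu(\lambda)$ is the random multigraph with vertex set $G$ in which the number of parallel edges between distinct $g,h\in G$ is an independent Poisson random variable with mean $\lambda\mu(g^{-1}h)$. Define $\lambda_c(\mu):=\sup\{\lambda : \Pr(G^\mu(\lambda)\text{ has an infinite component})=0\}$ (one always has $\lambda_c(\mu)\ge 1$). Fix a finite generating set $S$ of $G$ and let $|g|$ be the word length of $g$ (graph distance from $g$ to the identity in $\mathrm{Cay}(G,S)$). For $s,b>0$ let $\mathcal M_s^b(G):=\{\mu\in\mathcal M(G) : \mu(g)<b|g|^{-s}\text{ for all }g\in G\}$ (with $|e|^{-s}=\infty$). The percolation dimension is $\mathrm{pdim}(G):=\sup\{s : \exists b>0 \text{ such that } \inf_{\mu\in\mathcal M_s^b(G)}\lambda_c(\mu)=1\}$, i.e. the supremum of those $s$ for which, for some $b$, there is a sequence $\mu_i\in\mathcal M_s^b(G)$ with $\lambda_c(\mu_i)\to 1$. This value does not depend on the choice of $S$. *)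

theory Defs
  imports "HOL-Analysis.Analysis" "HOL-Probability.Probability"
begin

text \<open>The group G is the universe of a type of class group_add (written additively,
  not assumed commutative): product gh is g + h, inverse is -g, identity is 0.\<close>

definition sym_gens :: "'a::group_add set \<Rightarrow> 'a set" where
  "sym_gens S = S \<union> uminus ` S"

definition generates :: "'a::group_add set \<Rightarrow> bool" where
  "generates S \<longleftrightarrow> (\<forall>g. \<exists>xs. set xs \<subseteq> sym_gens S \<and> sum_list xs = g)"

text \<open>Word length = graph distance from the identity in Cay(G,S).\<close>
definition word_length :: "'a::group_add set \<Rightarrow> 'a \<Rightarrow> nat" where
  "word_length S g = (LEAST n. \<exists>xs. length xs = n \<and> set xs \<subseteq> sym_gens S \<and> sum_list xs = g)"

definition ball_cay :: "'a::group_add set \<Rightarrow> nat \<Rightarrow> 'a set" where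
  "ball_cay S n = {g. word_length S g \<le> n}"

definition sym_prob :: "('a::group_add \<Rightarrow> real) \<Rightarrow> bool" where
  "sym_prob \<mu> \<longleftrightarrow> (\<forall>g. 0 \<le> \<mu> g) \<and> (\<mu> has_sum 1) UNIV \<and> (\<forall>g. \<mu> g = \<mu> (- g))"

definition edge_pairs :: "'a set set" where
  "edge_pairs = {e. \<exists>g h. g \<noteq> h \<and> e = {g, h}}"

text \<open>Mean of the Poisson number of edges between g and h: lam * mu(g^-1 h)
  (well defined on unordered pairs by symmetry of mu).\<close>
definition pair_rate :: "('a::group_add \<Rightarrow> real) \<Rightarrow> real \<Rightarrow> 'a set \<Rightarrow> real" where
  "pair_rate \<mu> lam e = (THE r. \<exists>g h. g \<noteq> h \<and> e = {g, h} \<and> r = lam * \<mu> (- g + h))"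

text \<open>Poisson distribution with mean r \<ge> 0 (mean 0 = point mass at 0).\<close>
definition poisson0 :: "real \<Rightarrow> nat pmf" where
  "poisson0 r = (if 0 < r then poisson_pmf r else return_pmf 0)"

text \<open>Law of the random multigraph G^mu(lam): independent edge multiplicities.\<close>
definition rand_graph :: "('a::group_add \<Rightarrow> real) \<Rightarrow> real \<Rightarrow> ('a set \<Rightarrow> nat) measure" where
  "rand_graph \<mu> lam = (\<Pi>\<^sub>M e\<in>edge_pairs. measure_pmf (poisson0 (pair_rate \<mu> lam e)))"

definition adj :: "('a set \<Rightarrow> nat) \<Rightarrow> ('a \<times> 'a) set" where
  "adj \<omega> = {(g, h). g \<noteq> h \<and> 0 < \<omega> {g, h}}"

definition has_inf_component :: "('a set \<Rightarrow> nat) \<Rightarrow> bool" where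
  "has_inf_component \<omega> \<longleftrightarrow> (\<exists>g. infinite {h. (g, h) \<in> (adj \<omega>)\<^sup>*})"

definition lambda_c :: "('a::group_add \<Rightarrow> real) \<Rightarrow> ereal" where
  "lambda_c \<mu> = Sup {ereal lam | lam. 0 < lam \<and>
     measure (rand_graph \<mu> lam) {\<omega> \<in> space (rand_graph \<mu> lam). has_inf_component \<omega>} = 0}"

definition M_sb :: "'a::group_add set \<Rightarrow> real \<Rightarrow> real \<Rightarrow> ('a \<Rightarrow> real) set" where
  "M_sb S s b = {\<mu>. sym_prob \<mu> \<and>
     (\<forall>g. g \<noteq> 0 \<longrightarrow> \<mu> g < b * real (word_length S g) powr (- s))}"

definition pdim :: "'a::group_add set \<Rightarrow> ereal" where
  "pdim S = Sup {ereal s | s. 0 < s \<and> (\<exists>b>0. (INF \<mu>\<in>M_sb S s b. lambda_c \<mu>) = 1)}"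

end

theory Submission
  imports Defs "HOL-Library.Discrete_Functions"
begin


fun edgs :: "'a \<Rightarrow> 'a list \<Rightarrow> 'a set set" where
  "edgs v [] = {}" | "edgs v (h#ys) = insert {v,h} (edgs h ys)"

fun wt :: "('a set \<Rightarrow> real) \<Rightarrow> 'a \<Rightarrow> 'a list \<Rightarrow> real" where
  "wt q v [] = 1" | "wt q v (h#ys) = q {v,h} * wt q h ys"

definition PP :: "'a \<Rightarrow> 'a set \<Rightarrow> 'a list set" where
  "PP v F = {xs. set xs \<subseteq> F \<and> distinct (v#xs)}"

definition opn :: "('a set \<Rightarrow> nat) \<Rightarrow> 'a \<Rightarrow> 'a list \<Rightarrow> bool" where
  "opn \<omega> v xs \<longleftrightarrow> (\<forall>e\<in>edgs v xs. 0 < \<omega> e)"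

lemma finite_edgs: "finite (edgs v xs)"
  by (induction xs arbitrary: v) auto

lemma edgs_sub: "e \<in> edgs v xs \<Longrightarrow> e \<subseteq> set (v#xs)"
  by (induction xs arbitrary: v) auto

lemma edgs_pairs: "distinct (v#xs) \<Longrightarrow> edgs v xs \<subseteq> edge_pairs"
  by (induction xs arbitrary: v) (auto simp: edge_pairs_def)

lemma edgs_snoc: "edgs v (xs@[y]) = insert {last (v#xs), y} (edgs v xs)"
  by (induction xs arbitrary: v) auto

lemma edgs_append: "edgs v xs \<subseteq> edgs v (xs@ys)"
  by (induction xs arbitrary: v) auto

lemma prod_edgs: "distinct (v#xs) \<Longrightarrow> (\<Prod>e\<in>edgs v xs. q e) = wt q v xs"
proof (induction xs arbitrary: v)
  case Nil then show ?case by simp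
next
  case (Cons h ys)
  have nin: "{v,h} \<notin> edgs h ys"
  proof
    assume "{v,h} \<in> edgs h ys"
    then have "{v,h} \<subseteq> set (h#ys)" by (rule edgs_sub)
    then have "v \<in> set (h#ys)" by simp
    with Cons.prems show False by simp
  qed
  have "(\<Prod>e\<in>edgs v (h#ys). q e) = q {v,h} * (\<Prod>e\<in>edgs h ys. q e)"
    by (simp only: edgs.simps prod.insert[OF finite_edgs nin])
  also have "(\<Prod>e\<in>edgs h ys. q e) = wt q h ys" using Cons.IH Cons.prems by simp
  finally show ?case by simp
qed

lemma finite_PP: assumes "finite F" shows "finite (PP v F)"
proof -
  have "PP v F \<subseteq> {xs. set xs \<subseteq> F \<and> length xs \<le> card F}"
  proof
    fix xs assume "xs \<in> PP v F"
    then have "set xs \<subseteq> F" "distinct xs" by (auto simp: PP_def)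
    then have "length xs \<le> card F" using card_mono[OF assms] distinct_card[of xs] by metis
    then show "xs \<in> {xs. set xs \<subseteq> F \<and> length xs \<le> card F}" using \<open>set xs \<subseteq> F\<close> by simp
  qed
  then show ?thesis using finite_lists_length_le[OF assms] by (rule finite_subset)
qed

lemma PP_decomp: assumes "v \<notin> F"
  shows "PP v F = insert [] ((\<lambda>(h,ys). h#ys) ` (SIGMA h:F. PP h (F-{h})))"
proof (intro equalityI subsetI)
  fix xs assume "xs \<in> PP v F"
  then show "xs \<in> insert [] ((\<lambda>(h,ys). h#ys) ` (SIGMA h:F. PP h (F-{h})))"
  proof (cases xs)
    case (Cons h ys)
    then have "(h, ys) \<in> (SIGMA h:F. PP h (F-{h}))" using \<open>xs \<in> PP v F\<close> by (auto simp: PP_def)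
    then show ?thesis using Cons by force
  qed simp
next
  fix xs assume "xs \<in> insert [] ((\<lambda>(h,ys). h#ys) ` (SIGMA h:F. PP h (F-{h})))"
  then show "xs \<in> PP v F" using assms by (auto simp: PP_def)
qed

lemma PP_sum_bound:
  fixes q :: "'a set \<Rightarrow> real" and Q :: real
  assumes q0: "\<And>e. 0 \<le> q e" and Q1: "Q < 1"
    and qQ: "\<And>v F. finite F \<Longrightarrow> v \<notin> F \<Longrightarrow> (\<Sum>h\<in>F. q {v,h}) \<le> Q"
  shows "finite F \<Longrightarrow> v \<notin> F \<Longrightarrow> (\<Sum>xs\<in>PP v F. wt q v xs) \<le> 1 / (1 - Q)"
proof (induction "card F" arbitrary: F v rule: less_induct)
  case less
  have wt0: "\<And>v xs. 0 \<le> wt q v xs"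
  proof -
    fix v :: 'a and xs show "0 \<le> wt q v xs" by (induction xs arbitrary: v) (auto simp: q0)
  qed
  have Q0: "0 \<le> Q" using qQ[of "{}"] by simp
  have inj: "inj_on (\<lambda>(h,ys). h#ys) (SIGMA h:F. PP h (F-{h}))" by (auto simp: inj_on_def)
  have nin: "[] \<notin> (\<lambda>(h,ys). h#ys) ` (SIGMA h:F. PP h (F-{h}))" by auto
  have fin: "finite (SIGMA h:F. PP h (F-{h}))" using less.prems by (auto intro: finite_PP)
  have "(\<Sum>xs\<in>PP v F. wt q v xs) = 1 + (\<Sum>p\<in>(SIGMA h:F. PP h (F-{h})). wt q v ((\<lambda>(h,ys). h#ys) p))"
    unfolding PP_decomp[OF less.prems(2)]
    apply (subst sum.insert[OF finite_imageI[OF fin] nin])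
    apply (subst sum.reindex[OF inj])
    apply (simp only: wt.simps comp_def)
    done
  also have "\<dots> = 1 + (\<Sum>h\<in>F. q {v,h} * (\<Sum>ys\<in>PP h (F-{h}). wt q h ys))"
  proof -
    have "(\<Sum>p\<in>(SIGMA h:F. PP h (F-{h})). wt q v ((\<lambda>(h,ys). h#ys) p))
       = (\<Sum>h\<in>F. \<Sum>ys\<in>PP h (F-{h}). wt q v (h#ys))"
      by (subst sum.Sigma[OF less.prems(1)]) (auto intro: finite_PP less.prems simp: split_beta')
    also have "\<dots> = (\<Sum>h\<in>F. q {v,h} * (\<Sum>ys\<in>PP h (F-{h}). wt q h ys))"
      by (simp only: wt.simps sum_distrib_left)
    finally show ?thesis by simp
  qed
  also have "\<dots> \<le> 1 + (\<Sum>h\<in>F. q {v,h} * (1 / (1 - Q)))"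
  proof -
    have "(\<Sum>ys\<in>PP h (F-{h}). wt q h ys) \<le> 1 / (1 - Q)" if "h \<in> F" for h
    proof -
      have "card (F-{h}) < card F" using less.prems that by (intro card_Diff1_less)
      then show ?thesis using less.hyps[of "F-{h}" h] less.prems by simp
    qed
    then show ?thesis by (intro add_left_mono sum_mono mult_left_mono) (auto simp: q0)
  qed
  also have "\<dots> = 1 + (\<Sum>h\<in>F. q {v,h}) * (1 / (1 - Q))" by (simp add: sum_distrib_right sum_divide_distrib)
  also have "\<dots> \<le> 1 + Q * (1 / (1 - Q))"
    using qQ[OF less.prems] Q1 by (intro add_left_mono mult_right_mono) auto
  also have "\<dots> = 1 / (1 - Q)" using Q1 by (simp add: field_simps)
  finally show ?case .
qed

lemma path_exists:
  assumes "(g, h) \<in> (adj \<omega>)\<^sup>*"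
  shows "\<exists>xs. distinct (g#xs) \<and> opn \<omega> g xs \<and> last (g#xs) = h"
  using assms
proof (induction rule: rtrancl_induct)
  case base
  show ?case by (rule exI[of _ "[]"]) (simp add: opn_def)
next
  case (step h h')
  then obtain xs where xs: "distinct (g#xs)" "opn \<omega> g xs" "last (g#xs) = h" by blast
  have hh: "h \<noteq> h'" "0 < \<omega> {h,h'}" using step.hyps(2) by (auto simp: adj_def)
  show ?case
  proof (cases "h' \<in> set (g#xs)")
    case True
    then obtain ys zs where sp: "g#xs = ys @ h' # zs" by (meson split_list)
    show ?thesis
    proof (cases ys)
      case Nil
      then show ?thesis using sp by (intro exI[of _ "[]"]) (simp add: opn_def)
    next
      case (Cons a ys')
      then have a: "a = g" "xs = ys' @ h' # zs" using sp by auto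
      have "opn \<omega> g (ys' @ [h'])" using xs(2) edgs_append[of g "ys'@[h']" zs] a
        by (auto simp: opn_def)
      moreover have "distinct (g # ys' @ [h'])" using xs(1) a by auto
      ultimately show ?thesis by (intro exI[of _ "ys'@[h']"]) simp
    qed
  next
    case False
    have "opn \<omega> g (xs @ [h'])" using xs hh by (auto simp: opn_def edgs_snoc)
    then show ?thesis using xs False by (intro exI[of _ "xs@[h']"]) auto
  qed
qed


lemma pair_rate_eq:
  assumes sy: "\<And>g. \<mu> g = \<mu> (- g)" and uv: "u \<noteq> v"
  shows "pair_rate \<mu> lam {u,v} = lam * \<mu> (- u + v)"
  unfolding pair_rate_def
proof (rule the_equality)
  show "\<exists>g h. g \<noteq> h \<and> {u, v} = {g, h} \<and> lam * \<mu> (- u + v) = lam * \<mu> (- g + h)"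
    using uv by blast
next
  fix r assume "\<exists>g h. g \<noteq> h \<and> {u, v} = {g, h} \<and> r = lam * \<mu> (- g + h)"
  then obtain g h where gh: "g \<noteq> h" "{u, v} = {g, h}" "r = lam * \<mu> (- g + h)" by blast
  from gh(2) uv have "(g = u \<and> h = v) \<or> (g = v \<and> h = u)" by (auto simp: doubleton_eq_iff)
  then show "r = lam * \<mu> (- u + v)"
  proof
    assume "g = v \<and> h = u"
    then have "r = lam * \<mu> (- v + u)" using gh by simp
    also have "- v + u = - (- u + v)" by (simp add: minus_add)
    finally show ?thesis using sy by metis
  qed (use gh in simp)
qed

lemma poisson0_pos:
  assumes "0 \<le> r"
  shows "emeasure (measure_pmf (poisson0 r)) {k. 0 < k} = ennreal (1 - exp (- r))"
proof -
  have set: "{k::nat. 0 < k} = space (measure_pmf (poisson0 r)) - {0}" by auto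
  have "measure_pmf.prob (poisson0 r) {k. 0 < k} = 1 - pmf (poisson0 r) 0"
    unfolding set by (subst measure_pmf.prob_compl) (auto simp: measure_pmf_single)
  also have "pmf (poisson0 r) 0 = exp (- r)"
    using assms by (auto simp: poisson0_def pmf_poisson)
  finally show ?thesis by (simp add: measure_pmf.emeasure_eq_measure)
qed

lemma no_inf_component:
  fixes \<mu> :: "'a::group_add \<Rightarrow> real"
  assumes sp: "sym_prob \<mu>" and lam: "0 < lam" and cU: "countable (UNIV::'a set)"
    and Q1: "Q < 1"
    and QT: "\<And>T. finite T \<Longrightarrow> 0 \<notin> T \<Longrightarrow> (\<Sum>g\<in>T. 1 - exp (- (lam * \<mu> g))) \<le> Q"
  shows "measure (rand_graph \<mu> lam) {\<omega> \<in> space (rand_graph \<mu> lam). has_inf_component \<omega>} = 0"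
proof -
  have mu0: "\<And>g. 0 \<le> \<mu> g" and sy: "\<And>g. \<mu> g = \<mu> (- g)" using sp by (auto simp: sym_prob_def)
  define M where "M = (\<lambda>e. measure_pmf (poisson0 (pair_rate \<mu> lam e)))"
  interpret P: product_prob_space M edge_pairs
    by (intro product_prob_spaceI) (simp add: M_def prob_space_measure_pmf)
  have RG: "rand_graph \<mu> lam = PiM edge_pairs M" by (simp add: rand_graph_def M_def)
  define q where "q e = max 0 (1 - exp (- pair_rate \<mu> lam e))" for e :: "'a set"
  have q0: "\<And>e. 0 \<le> q e" by (simp add: q_def)
  have qv: "q {v,h} = 1 - exp (- (lam * \<mu> (- v + h)))" if "v \<noteq> h" for v h
    using pair_rate_eq[of \<mu> v h lam, OF sy that] lam mu0[of "- v + h"] by (simp add: q_def)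
  have qQ: "(\<Sum>h\<in>F. q {v,h}) \<le> Q" if "finite F" "v \<notin> F" for v F
  proof -
    have inj: "inj_on (\<lambda>h. - v + h) F" by (auto simp: inj_on_def)
    have "(\<Sum>h\<in>F. q {v,h}) = (\<Sum>h\<in>F. 1 - exp (- (lam * \<mu> (- v + h))))"
      using that by (intro sum.cong refl qv) auto
    also have "\<dots> = (\<Sum>g\<in>(\<lambda>h. - v + h) ` F. 1 - exp (- (lam * \<mu> g)))"
      by (simp add: sum.reindex[OF inj])
    also have "\<dots> \<le> Q"
    proof (rule QT)
      show "finite ((\<lambda>h. - v + h) ` F)" using that by simp
      show "0 \<notin> (\<lambda>h. - v + h) ` F"
      proof
        assume "0 \<in> (\<lambda>h. - v + h) ` F"
        then obtain h where "h \<in> F" "- v + h = 0" by auto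
        then have "h = v" by (metis add_minus_cancel add.right_neutral)
        with that \<open>h \<in> F\<close> show False by simp
      qed
    qed
    finally show ?thesis .
  qed
  define Op where "Op g xs = prod_emb edge_pairs M (edgs g xs) (PiE (edgs g xs) (\<lambda>_. {k. 0 < k}))"
    for g :: 'a and xs
  have O_sets: "Op g xs \<in> sets (PiM edge_pairs M)" if "distinct (g#xs)" for g xs
    unfolding Op_def
    by (intro measurable_prod_emb sets_PiM_I_finite) (auto simp: edgs_pairs[OF that] finite_edgs M_def)
  have O_mem: "\<omega> \<in> Op g xs \<longleftrightarrow> opn \<omega> g xs" if "\<omega> \<in> space (PiM edge_pairs M)" for \<omega> g xs
    using that by (simp add: Op_def prod_emb_def restrict_PiE_iff opn_def space_PiM Pi_iff)
  have O_meas: "emeasure (PiM edge_pairs M) (Op g xs) = ennreal (wt q g xs)" if dg: "distinct (g#xs)" for g xs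
  proof -
    have "emeasure (PiM edge_pairs M) (Op g xs) = (\<Prod>e\<in>edgs g xs. emeasure (M e) {k. 0 < k})"
      unfolding Op_def
      by (rule P.emeasure_PiM_emb) (auto simp: edgs_pairs[OF that] finite_edgs M_def)
    also have "\<dots> = (\<Prod>e\<in>edgs g xs. ennreal (q e))"
    proof (rule prod.cong)
      fix e assume "e \<in> edgs g xs"
      then obtain u v where e: "e = {u,v}" "u \<noteq> v"
        using edgs_pairs[OF dg] by (auto simp: edge_pairs_def)
      have "0 \<le> pair_rate \<mu> lam e" using e pair_rate_eq[of \<mu> u v lam, OF sy e(2)] lam mu0[of "- u + v"] by simp
      then show "emeasure (M e) {k. 0 < k} = ennreal (q e)"
        by (simp add: M_def poisson0_pos q_def)
    qed simp
    also have "\<dots> = ennreal (wt q g xs)"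
      by (simp add: prod_ennreal q0 prod_edgs[OF that])
    finally show ?thesis .
  qed
  define F where "F m = from_nat_into (UNIV::'a set) ` {..m}" for m :: nat
  have Ffin: "finite (F m)" for m by (simp add: F_def)
  have Fmono: "F m \<subseteq> F n" if "m \<le> n" for m n using that by (auto simp: F_def)
  define N where "N g m \<omega> = (\<Sum>xs\<in>PP g (F m - {g}). indicator (Op g xs) \<omega> :: ennreal)"
    for g :: 'a and m :: nat and \<omega>
  have PPd: "distinct (g#xs)" if "xs \<in> PP g A" for g xs A using that by (simp add: PP_def)
  have Nmeas: "N g m \<in> borel_measurable (PiM edge_pairs M)" for g m
    unfolding N_def by (intro borel_measurable_sum borel_measurable_indicator O_sets PPd) 
  have Ninc: "incseq (\<lambda>m. N g m)" for g
  proof (rule incseq_SucI, rule le_funI)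
    fix m \<omega>
    have "PP g (F m - {g}) \<subseteq> PP g (F (Suc m) - {g})"
      using Fmono[of m "Suc m"] by (auto simp: PP_def)
    then show "N g m \<omega> \<le> N g (Suc m) \<omega>"
      unfolding N_def by (intro sum_mono2 finite_PP) (auto simp: Ffin)
  qed
  have Nint: "integral\<^sup>N (PiM edge_pairs M) (N g m) \<le> ennreal (1 / (1 - Q))" for g m
  proof -
    have "integral\<^sup>N (PiM edge_pairs M) (N g m)
        = (\<Sum>xs\<in>PP g (F m - {g}). emeasure (PiM edge_pairs M) (Op g xs))"
      unfolding N_def
      by (subst nn_integral_sum) (auto intro!: borel_measurable_indicator O_sets PPd sum.cong nn_integral_indicator)
    also have "\<dots> = (\<Sum>xs\<in>PP g (F m - {g}). ennreal (wt q g xs))"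
      by (intro sum.cong refl O_meas PPd)
    also have "\<dots> = ennreal (\<Sum>xs\<in>PP g (F m - {g}). wt q g xs)"
    proof (rule sum_ennreal)
      fix xs show "0 \<le> wt q g xs" by (induction xs arbitrary: g) (auto simp: q0)
    qed
    also have "\<dots> \<le> ennreal (1 / (1 - Q))"
      by (intro ennreal_leI PP_sum_bound[OF q0 Q1 qQ]) (auto simp: Ffin)
    finally show ?thesis .
  qed
  define NS where "NS g \<omega> = (SUP m. N g m \<omega>)" for g \<omega>
  have AEg: "AE \<omega> in PiM edge_pairs M. NS g \<omega> \<noteq> \<infinity>" for g
  proof (rule nn_integral_PInf_AE)
    show "NS g \<in> borel_measurable (PiM edge_pairs M)"
      unfolding NS_def by (intro borel_measurable_SUP Nmeas) auto
    have "integral\<^sup>N (PiM edge_pairs M) (NS g) = (SUP m. integral\<^sup>N (PiM edge_pairs M) (N g m))"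
      unfolding NS_def by (rule nn_integral_monotone_convergence_SUP[OF Ninc Nmeas])
    also have "\<dots> \<le> ennreal (1 / (1 - Q))" by (intro SUP_least Nint)
    finally show "integral\<^sup>N (PiM edge_pairs M) (NS g) \<noteq> \<infinity>"
      using neq_top_trans[OF ennreal_neq_top] by (simp add: infinity_ennreal_def)
  qed
  have inf: "NS g \<omega> = \<infinity>" if sp\<omega>: "\<omega> \<in> space (PiM edge_pairs M)"
    and infC: "infinite {h. (g, h) \<in> (adj \<omega>)\<^sup>*}" for g \<omega>
  proof -
    have "\<exists>m\<in>UNIV. of_nat n \<le> N g m \<omega>" for n
    proof -
      obtain A where A: "finite A" "card A = Suc n" "A \<subseteq> {h. (g, h) \<in> (adj \<omega>)\<^sup>*}"
        using infinite_arbitrarily_large[OF infC, of "Suc n"] by metis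
      have "\<forall>a\<in>A. \<exists>xs. distinct (g#xs) \<and> opn \<omega> g xs \<and> last (g#xs) = a"
      proof
        fix a assume "a \<in> A"
        then have "(g, a) \<in> (adj \<omega>)\<^sup>*" using A(3) by auto
        then show "\<exists>xs. distinct (g#xs) \<and> opn \<omega> g xs \<and> last (g#xs) = a" by (rule path_exists)
      qed
      then obtain pa where pa: "\<And>a. a \<in> A \<Longrightarrow> distinct (g#pa a) \<and> opn \<omega> g (pa a) \<and> last (g#pa a) = a"
        by metis
      define V where "V = (\<Union>a\<in>A. set (pa a))"
      have Vfin: "finite V" using A(1) by (simp add: V_def)
      define m where "m = Max (insert 0 (to_nat_on (UNIV::'a set) ` V))"
      have VF: "V \<subseteq> F m"
      proof
        fix x assume "x \<in> V"
        then have "to_nat_on (UNIV::'a set) x \<le> m" unfolding m_def using Vfin by (intro Max_ge) auto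
        moreover have "from_nat_into (UNIV::'a set) (to_nat_on UNIV x) = x"
          using cU by (simp add: from_nat_into_to_nat_on)
        ultimately show "x \<in> F m" unfolding F_def by (metis atMost_iff imageI)
      qed
      define X where "X = {xs\<in>PP g (F m - {g}). opn \<omega> g xs}"
      have Xfin: "finite X" unfolding X_def using finite_PP[OF finite_Diff[OF Ffin]] by simp
      have "A \<subseteq> insert g ((\<lambda>xs. last (g#xs)) ` X)"
      proof
        fix a assume a: "a \<in> A"
        have d: "distinct (g # pa a)" and o: "opn \<omega> g (pa a)" and l: "last (g # pa a) = a"
          using pa[OF a] by auto
        have "set (pa a) \<subseteq> V" unfolding V_def using a by blast
        then have "set (pa a) \<subseteq> F m - {g}" using VF d by auto
        then have "pa a \<in> X" unfolding X_def PP_def using d o by simp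
        then have "last (g # pa a) \<in> (\<lambda>xs. last (g#xs)) ` X" by (rule imageI)
        then show "a \<in> insert g ((\<lambda>xs. last (g#xs)) ` X)" using l by simp
      qed
      then have "card A \<le> card (insert g ((\<lambda>xs. last (g#xs)) ` X))"
        by (intro card_mono) (auto simp: Xfin)
      also have "\<dots> \<le> Suc (card ((\<lambda>xs. last (g#xs)) ` X))" by (rule card_insert_le_m1) auto
      also have "\<dots> \<le> Suc (card X)" using card_image_le[OF Xfin, of "\<lambda>xs. last (g#xs)"] by (simp del: last.simps)
      finally have nX: "n \<le> card X" using A(2) by simp
      have "N g m \<omega> = (\<Sum>xs\<in>PP g (F m - {g}). indicator {xs. \<omega> \<in> Op g xs} xs)"
        unfolding N_def by (intro sum.cong) (auto simp: indicator_def)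
      also have "\<dots> = of_nat (card (PP g (F m - {g}) \<inter> {xs. \<omega> \<in> Op g xs}))"
      proof -
        have "(\<Sum>xs\<in>PP g (F m - {g}). indicator {xs. \<omega> \<in> Op g xs} xs :: ennreal)
            = of_nat (\<Sum>xs\<in>PP g (F m - {g}). indicator {xs. \<omega> \<in> Op g xs} xs :: nat)"
          by (simp add: of_nat_sum indicator_def)
        also have "(\<Sum>xs\<in>PP g (F m - {g}). indicator {xs. \<omega> \<in> Op g xs} xs :: nat)
            = card (PP g (F m - {g}) \<inter> {xs. \<omega> \<in> Op g xs})"
          by (rule sum_indicator_eq_card) (simp add: finite_PP Ffin)
        finally show ?thesis .
      qed
      also have "PP g (F m - {g}) \<inter> {xs. \<omega> \<in> Op g xs} = X"
        unfolding X_def using O_mem[OF sp\<omega>] by auto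
      finally have "N g m \<omega> = of_nat (card X)" .
      then have "of_nat n \<le> N g m \<omega>" using nX by (simp add: of_nat_le_iff)
      then show ?thesis by blast
    qed
    then have "(SUP m. N g m \<omega>) = top" by (rule ennreal_SUP_eq_top)
    then show ?thesis unfolding NS_def by (simp add: infinity_ennreal_def)
  qed
  have AEall: "AE \<omega> in PiM edge_pairs M. \<forall>g\<in>UNIV. NS g \<omega> \<noteq> \<infinity>"
    using AEg cU by (intro AE_ball_countable') auto
  have "AE \<omega> in PiM edge_pairs M. \<not> has_inf_component \<omega>"
    using AEall AE_space by eventually_elim (auto simp: has_inf_component_def dest: inf)
  then obtain Z where Z: "{\<omega> \<in> space (PiM edge_pairs M). \<not> \<not> has_inf_component \<omega>} \<subseteq> Z"
      "emeasure (PiM edge_pairs M) Z = 0" "Z \<in> sets (PiM edge_pairs M)"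
    by (rule AE_E)
  let ?S = "{\<omega> \<in> space (PiM edge_pairs M). has_inf_component \<omega>}"
  have "measure (PiM edge_pairs M) ?S = 0"
  proof (cases "?S \<in> sets (PiM edge_pairs M)")
    case True
    have "emeasure (PiM edge_pairs M) ?S \<le> emeasure (PiM edge_pairs M) Z"
      using Z by (intro emeasure_mono) auto
    then have "emeasure (PiM edge_pairs M) ?S = 0" using Z(2) by simp
    then show ?thesis by (simp add: measure_def)
  next
    case False
    then show ?thesis by (rule measure_notin_sets)
  qed
  then show ?thesis by (simp add: RG)
qed



lemma wl_exists:
  assumes "generates S"
  shows "\<exists>xs. length xs = word_length S g \<and> set xs \<subseteq> sym_gens S \<and> sum_list xs = g"
proof -
  from assms obtain xs where "set xs \<subseteq> sym_gens S \<and> sum_list xs = g" by (auto simp: generates_def)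
  then have "\<exists>n. \<exists>xs. length xs = n \<and> set xs \<subseteq> sym_gens S \<and> sum_list xs = g" by blast
  then show ?thesis unfolding word_length_def by (rule LeastI_ex)
qed

lemma wl_le:
  assumes "set xs \<subseteq> sym_gens S"
  shows "word_length S (sum_list xs) \<le> length xs"
  unfolding word_length_def by (rule Least_le) (use assms in blast)

lemma wl_zero_iff:
  assumes "generates S"
  shows "word_length S g = 0 \<longleftrightarrow> g = 0"
proof
  assume "word_length S g = 0"
  with wl_exists[OF assms, of g] show "g = 0" by auto
next
  assume "g = 0"
  then show "word_length S g = 0" using wl_le[of "[]" S] by simp
qed

lemma ball_finite:
  assumes "finite S" "generates S"
  shows "finite (ball_cay S n)"
proof -
  have sub: "ball_cay S n \<subseteq> sum_list ` {xs. set xs \<subseteq> sym_gens S \<and> length xs \<le> n}"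
  proof
    fix g assume "g \<in> ball_cay S n"
    then have "word_length S g \<le> n" by (simp add: ball_cay_def)
    with wl_exists[OF assms(2), of g] show "g \<in> sum_list ` {xs. set xs \<subseteq> sym_gens S \<and> length xs \<le> n}"
      by force
  qed
  have fs: "finite (sym_gens S)" using assms(1) by (simp add: sym_gens_def)
  show ?thesis by (rule finite_subset[OF sub finite_imageI[OF finite_lists_length_le[OF fs]]])
qed

lemma countable_UNIV_gen:
  fixes S :: "'a::group_add set"
  assumes "finite S" "generates S"
  shows "countable (UNIV :: 'a::group_add set)"
proof -
  have sub: "(UNIV :: 'a set) \<subseteq> sum_list ` lists (sym_gens S)"
  proof
    fix g :: 'a
    obtain xs where "set xs \<subseteq> sym_gens S" "sum_list xs = g" using assms(2) by (auto simp: generates_def)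
    then show "g \<in> sum_list ` lists (sym_gens S)" by (auto intro!: image_eqI[of g _ xs])
  qed
  have cs: "countable (sym_gens S)" using assms(1) by (simp add: sym_gens_def countable_finite)
  show ?thesis by (rule countable_subset[OF sub countable_image[OF countable_lists[OF cs]]])
qed

lemma dyadic_bound:
  fixes S :: "'a::group_add set" and c k s' :: real
  assumes fS: "finite S" and gen: "generates S"
    and H: "\<And>n::nat. 0 < n \<Longrightarrow> real (card (ball_cay S n)) < c * real n powr k"
    and sk: "k < s'" and s0: "0 < s'"
  shows "\<exists>K. \<forall>T. finite T \<longrightarrow> 0 \<notin> T \<longrightarrow> (\<Sum>g\<in>T. real (word_length S g) powr (- s')) \<le> K"
proof -
  define r where "r = (2::real) powr (k - s')"
  have r0: "0 < r" by (simp add: r_def)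
  have "(2::real) powr (k - s') < 2 powr 0" by (rule powr_less_mono) (use sk in auto)
  then have r1: "r < 1" by (simp add: r_def)
  have "real (card (ball_cay S 1)) < c" using H[of 1] by simp
  moreover have "0 \<le> real (card (ball_cay S 1))" by simp
  ultimately have c0: "0 \<le> c" by linarith
  define K where "K = c * 2 powr k / (1 - r)"
  show ?thesis
  proof (intro exI allI impI)
    fix T :: "'a set" assume T: "finite T" "0 \<notin> T"
    define w where "w g = word_length S g" for g
    define j where "j g = floor_log (w g)" for g
    have w1: "1 \<le> w g" if "g \<in> T" for g
      using that T wl_zero_iff[OF gen, of g] by (auto simp: w_def)
    have inner: "(\<Sum>g\<in>{g\<in>T. j g = i}. real (w g) powr (- s')) \<le> c * 2 powr k * r ^ i" for i
    proof -
      have "(\<Sum>g\<in>{g\<in>T. j g = i}. real (w g) powr (- s')) \<le> (\<Sum>g\<in>{g\<in>T. j g = i}. 2 powr (- (s' * i)))"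
      proof (rule sum_mono)
        fix g assume g: "g \<in> {g\<in>T. j g = i}"
        have "2 ^ i \<le> w g" using floor_log_exp2_le[of "w g"] w1[of g] g by (auto simp: j_def)
        then have le: "(2::real) ^ i \<le> real (w g)" by (metis of_nat_le_iff of_nat_numeral of_nat_power)
        have "real (w g) powr (- s') \<le> ((2::real) ^ i) powr (- s')"
          by (rule powr_mono2') (use s0 le in auto)
        also have "((2::real) ^ i) powr (- s') = 2 powr (- (s' * i))"
          by (simp add: powr_realpow[symmetric] powr_powr mult.commute)
        finally show "real (w g) powr (- s') \<le> 2 powr (- (s' * i))" .
      qed
      also have "\<dots> = real (card {g\<in>T. j g = i}) * 2 powr (- (s' * i))" by simp
      also have "\<dots> \<le> real (card (ball_cay S (2 ^ (i+1)))) * 2 powr (- (s' * i))"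
      proof -
        have "{g\<in>T. j g = i} \<subseteq> ball_cay S (2 ^ (i+1))"
        proof
          fix g assume g: "g \<in> {g\<in>T. j g = i}"
          have "w g < 2 * 2 ^ i" using floor_log_exp2_gt[of "w g"] g by (auto simp: j_def)
          then show "g \<in> ball_cay S (2 ^ (i+1))" by (simp add: ball_cay_def w_def)
        qed
        then have "card {g\<in>T. j g = i} \<le> card (ball_cay S (2 ^ (i+1)))"
          by (intro card_mono ball_finite fS gen)
        then show ?thesis by (intro mult_right_mono) auto
      qed
      also have "\<dots> \<le> c * real (2 ^ (i+1)) powr k * 2 powr (- (s' * i))"
        using H[of "2 ^ (i+1)"] by (intro mult_right_mono) auto
      also have "real (2 ^ (i+1)) powr k = 2 powr (k * (i+1))"
      proof -
        have "real (2 ^ (i+1)) = (2::real) powr real (i+1)" by (subst powr_realpow) auto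
        then have "real (2 ^ (i+1)) powr k = 2 powr (real (i+1) * k)" by (simp add: powr_powr)
        then show ?thesis by (simp add: mult.commute)
      qed
      also have "c * 2 powr (k * (i+1)) * 2 powr (- (s' * i)) = c * 2 powr k * r ^ i"
      proof -
        have "r ^ i = 2 powr ((k - s') * i)" unfolding r_def by (simp add: powr_realpow[symmetric] powr_powr)
        moreover have "2 powr (k * (i+1)) * 2 powr (- (s' * i)) = 2 powr k * 2 powr ((k - s') * i)"
          by (simp add: powr_add[symmetric] algebra_simps)
        ultimately show ?thesis by simp
      qed
      finally show ?thesis .
    qed
    have "(\<Sum>g\<in>T. real (word_length S g) powr (- s')) = (\<Sum>i\<in>j ` T. \<Sum>g\<in>{g\<in>T. j g = i}. real (w g) powr (- s'))"
      using T(1) by (subst sum.group) (auto simp: w_def)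
    also have "\<dots> \<le> (\<Sum>i\<in>j ` T. c * 2 powr k * r ^ i)" by (intro sum_mono inner)
    also have "\<dots> = c * 2 powr k * (\<Sum>i\<in>j ` T. r ^ i)" by (simp add: sum_distrib_left)
    also have "(\<Sum>i\<in>j ` T. r ^ i) \<le> (\<Sum>i. r ^ i)"
      using r0 r1 T(1) by (intro sum_le_suminf summable_geometric) auto
    also have "(\<Sum>i. r ^ i) = 1 / (1 - r)" using r0 r1 by (simp add: suminf_geometric)
    finally show "(\<Sum>g\<in>T. real (word_length S g) powr (- s')) \<le> K"
      using c0 by (simp add: K_def mult_left_mono divide_simps)
  qed
qed


lemma h_mono:
  fixes x y :: real
  assumes "0 \<le> x" "x \<le> y"
  shows "x - 1 + exp (- x) \<le> y - 1 + exp (- y)"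
proof -
  have e: "exp (- y) = exp (- x) * exp (- (y - x))" by (simp add: exp_add[symmetric])
  have "exp (- x) - exp (- y) = exp (- x) * (1 - exp (- (y - x)))" by (simp add: e algebra_simps)
  also have "\<dots> \<le> 1 * (1 - exp (- (y - x)))"
  proof (rule mult_right_mono)
    show "exp (- x) \<le> 1" using assms by simp
    show "0 \<le> 1 - exp (- (y - x))" using assms by simp
  qed
  also have "\<dots> \<le> y - x" using exp_minus_ge[of "y - x"] by simp
  finally show ?thesis by simp
qed

lemma sum_le_one:
  assumes sp: "sym_prob \<mu>" and "finite T"
  shows "sum \<mu> T \<le> 1"
proof -
  have "(\<mu> has_sum 1) UNIV" "\<And>g. 0 \<le> \<mu> g" using sp by (auto simp: sym_prob_def)
  then show ?thesis using assms(2) by (intro finite_sum_le_has_sum) auto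
qed

lemma lambda_c_lower:
  fixes \<mu> :: "'a::group_add \<Rightarrow> real"
  assumes cU: "countable (UNIV :: 'a set)" and sp: "sym_prob \<mu>" and d0: "0 < \<delta>"
    and alt: "1/4 \<le> \<mu> 0 \<or> (\<exists>g0. g0 \<noteq> 0 \<and> \<delta> \<le> \<mu> g0)"
  shows "ereal (1 + min (1/4) ((\<delta> - 1 + exp (- \<delta>)) / 2)) \<le> lambda_c \<mu>"
proof -
  define hd where "hd = \<delta> - 1 + exp (- \<delta>)"
  have hd0: "0 < hd" using exp_minus_greater[of \<delta>] d0 by (simp add: hd_def)
  have hdd: "hd \<le> \<delta>" using d0 by (simp add: hd_def)
  define lam where "lam = 1 + min (1/4) (hd / 2)"
  have lam1: "1 \<le> lam" and lam54: "lam \<le> 5/4" and lamh: "lam \<le> 1 + hd / 2" using hd0 by (auto simp: lam_def)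
  define Q where "Q = max (3/4 * lam) (lam - hd)"
  have Q1: "Q < 1" using lam54 lamh hd0 by (simp add: Q_def)
  have mu0: "\<And>g. 0 \<le> \<mu> g" using sp by (auto simp: sym_prob_def)
  have p_le: "1 - exp (- (lam * \<mu> g)) \<le> lam * \<mu> g" for g using exp_minus_ge[of "lam * \<mu> g"] by simp
  have QT: "(\<Sum>g\<in>T. 1 - exp (- (lam * \<mu> g))) \<le> Q" if T: "finite T" "0 \<notin> T" for T
  proof -
    have sl: "(\<Sum>g\<in>T. 1 - exp (- (lam * \<mu> g))) \<le> lam * sum \<mu> T"
      by (simp add: sum_distrib_left sum_mono p_le)
    from alt show ?thesis
    proof
      assume a: "1/4 \<le> \<mu> 0"
      have "sum \<mu> (insert 0 T) \<le> 1" using sum_le_one[OF sp, of "insert 0 T"] T by simp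
      then have "sum \<mu> T \<le> 3/4" using a T by simp
      then have "lam * sum \<mu> T \<le> lam * (3/4)" using lam1 by (intro mult_left_mono) auto
      then show ?thesis using sl by (simp add: Q_def)
    next
      assume "\<exists>g0. g0 \<noteq> 0 \<and> \<delta> \<le> \<mu> g0"
      then obtain g0 where g0: "g0 \<noteq> 0" "\<delta> \<le> \<mu> g0" by blast
      show ?thesis
      proof (cases "g0 \<in> T")
        case True
        have "(\<Sum>g\<in>T. 1 - exp (- (lam * \<mu> g)))
            = (1 - exp (- (lam * \<mu> g0))) + (\<Sum>g\<in>T - {g0}. 1 - exp (- (lam * \<mu> g)))"
          using True T by (simp add: sum.remove)
        also have "\<dots> \<le> (1 - exp (- (lam * \<mu> g0))) + lam * sum \<mu> (T - {g0})"
          by (simp add: sum_distrib_left sum_mono p_le)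
        also have "sum \<mu> (T - {g0}) = sum \<mu> T - \<mu> g0" using True T by (simp add: sum_diff1)
        also have "(1 - exp (- (lam * \<mu> g0))) + lam * (sum \<mu> T - \<mu> g0)
            = lam * sum \<mu> T - (lam * \<mu> g0 - 1 + exp (- (lam * \<mu> g0)))" by (simp add: algebra_simps)
        also have "\<dots> \<le> lam - hd"
        proof -
          have "lam * sum \<mu> T \<le> lam * 1" using sum_le_one[OF sp T(1)] lam1 by (intro mult_left_mono) auto
          moreover have "\<delta> \<le> lam * \<mu> g0"
          proof -
            have "1 * \<mu> g0 \<le> lam * \<mu> g0" by (rule mult_right_mono[OF lam1 mu0])
            then show ?thesis using g0(2) by simp
          qed
          then have "hd \<le> lam * \<mu> g0 - 1 + exp (- (lam * \<mu> g0))"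
            unfolding hd_def using d0 by (intro h_mono) auto
          ultimately show ?thesis by simp
        qed
        finally show ?thesis by (simp add: Q_def)
      next
        case False
        have "sum \<mu> (insert g0 T) \<le> 1" using sum_le_one[OF sp, of "insert g0 T"] T by simp
        then have "sum \<mu> T \<le> 1 - \<delta>" using False T g0 by simp
        then have "lam * sum \<mu> T \<le> lam * (1 - \<delta>)" using lam1 by (intro mult_left_mono) auto
        also have "\<dots> \<le> lam - hd"
        proof -
          have "1 * \<delta> \<le> lam * \<delta>" by (rule mult_right_mono[OF lam1]) (use d0 in simp)
          then show ?thesis using hdd by (simp add: right_diff_distrib)
        qed
        finally show ?thesis using sl by (simp add: Q_def)
      qed
    qed
  qed
  have lam0: "0 < lam" using lam1 by simp
  have "measure (rand_graph \<mu> lam) {\<omega> \<in> space (rand_graph \<mu> lam). has_inf_component \<omega>} = 0"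
    by (rule no_inf_component[OF sp lam0 cU Q1 QT])
  then have "ereal lam \<in> {ereal lam | lam. 0 < lam \<and>
     measure (rand_graph \<mu> lam) {\<omega> \<in> space (rand_graph \<mu> lam). has_inf_component \<omega>} = 0}"
    using lam0 by blast
  then have "ereal lam \<le> lambda_c \<mu>" unfolding lambda_c_def by (rule Sup_upper)
  then show ?thesis by (simp add: lam_def hd_def)
qed

lemma concentration:
  fixes S :: "'a::group_add set" and c k s b :: real
  assumes fS: "finite S" and gen: "generates S"
    and H: "\<And>n::nat. 0 < n \<Longrightarrow> real (card (ball_cay S n)) < c * real n powr k"
    and sk: "k < s" and s0: "0 < s" and b0: "0 < b"
  shows "\<exists>\<delta>>0. \<forall>\<mu>\<in>M_sb S s b. 1/4 \<le> \<mu> 0 \<or> (\<exists>g0. g0 \<noteq> 0 \<and> \<delta> \<le> \<mu> g0)"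
proof -
  define s' where "s' = (s + max k 0) / 2"
  have s'1: "k < s'" "0 < s'" "s' < s" using sk s0 by (auto simp: s'_def)
  obtain K where K: "\<And>T. finite T \<Longrightarrow> 0 \<notin> T \<Longrightarrow> (\<Sum>g\<in>T. real (word_length S g) powr (- s')) \<le> K"
    using dyadic_bound[OF fS gen H s'1(1) s'1(2)] by blast
  have K0: "0 \<le> K" using K[of "{}"] by simp
  have bK: "0 \<le> b * K" using b0 K0 by simp
  have lim: "((\<lambda>R::nat. real R powr (- (s - s'))) \<longlongrightarrow> 0) sequentially"
    by (rule tendsto_neg_powr) (use s'1 filterlim_real_sequentially in auto)
  have "0 < 1 / (8 * (b * K + 1))" using bK by (simp add: add_pos_nonneg)
  from order_tendstoD(2)[OF lim this] obtain R0 where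
    R0: "\<And>n. R0 \<le> n \<Longrightarrow> real n powr (- (s - s')) < 1 / (8 * (b * K + 1))"
    by (auto simp: eventually_sequentially)
  define R where "R = max R0 1"
  have R1: "1 \<le> R" and Rb: "real R powr (- (s - s')) < 1 / (8 * (b * K + 1))"
    using R0[of R] by (auto simp: R_def)
  have bKR: "b * K * real R powr (- (s - s')) \<le> 1/8"
  proof -
    have "b * K * real R powr (- (s - s')) \<le> (b * K + 1) * real R powr (- (s - s'))"
      by (intro mult_right_mono) auto
    also have "\<dots> \<le> (b * K + 1) * (1 / (8 * (b * K + 1)))"
      using Rb bK by (intro mult_left_mono) auto
    also have "\<dots> = 1/8" using bK by (simp add: field_simps)
    finally show ?thesis .
  qed
  define B where "B = ball_cay S R"
  have Bfin: "finite B" unfolding B_def by (rule ball_finite[OF fS gen])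
  have B0: "0 \<in> B" unfolding B_def ball_cay_def using wl_zero_iff[OF gen, of 0] by simp
  have cB: "1 \<le> card B" using Bfin B0 by (metis One_nat_def Suc_leI card_gt_0_iff empty_iff)
  define \<delta> where "\<delta> = 1 / (4 * real (card B))"
  have d0: "0 < \<delta>" using cB by (simp add: \<delta>_def)
  show ?thesis
  proof (intro exI[of _ \<delta>] conjI ballI d0)
    fix \<mu> assume "\<mu> \<in> M_sb S s b"
    then have sp: "sym_prob \<mu>" and mub: "\<And>g. g \<noteq> 0 \<Longrightarrow> \<mu> g < b * real (word_length S g) powr (- s)"
      by (auto simp: M_sb_def)
    have mu0: "\<And>g. 0 \<le> \<mu> g" and hs: "(\<mu> has_sum 1) UNIV" using sp by (auto simp: sym_prob_def)
    have tail: "sum \<mu> T \<le> 1/8" if T: "finite T" "T \<inter> B = {}" for T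
    proof -
      have T0: "0 \<notin> T" using T B0 by auto
      have "sum \<mu> T \<le> (\<Sum>g\<in>T. b * real R powr (- (s - s')) * real (word_length S g) powr (- s'))"
      proof (rule sum_mono)
        fix g assume g: "g \<in> T"
        then have gB: "g \<notin> B" using T by auto
        then have wR: "R < word_length S g" by (simp add: B_def ball_cay_def)
        have g0: "g \<noteq> 0" using g T0 by auto
        have wpos: "0 < real (word_length S g)" using wR by simp
        have "\<mu> g < b * real (word_length S g) powr (- s)" by (rule mub[OF g0])
        also have "real (word_length S g) powr (- s)
            = real (word_length S g) powr (- (s - s')) * real (word_length S g) powr (- s')"
          by (simp add: powr_add[symmetric])
        also have "real (word_length S g) powr (- (s - s')) \<le> real R powr (- (s - s'))"
          by (rule powr_mono2') (use s'1 wR R1 in auto)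
        finally show "\<mu> g \<le> b * real R powr (- (s - s')) * real (word_length S g) powr (- s')"
          using b0 by (smt (verit) mult.assoc mult_left_mono mult_right_mono powr_ge_zero)
      qed
      also have "\<dots> = b * real R powr (- (s - s')) * (\<Sum>g\<in>T. real (word_length S g) powr (- s'))"
        by (simp add: sum_distrib_left)
      also have "\<dots> \<le> b * real R powr (- (s - s')) * K"
        using K[OF T(1) T0] b0 by (intro mult_left_mono) auto
      also have "\<dots> = b * K * real R powr (- (s - s'))" by simp
      also have "\<dots> \<le> 1/8" by (rule bKR)
      finally show ?thesis .
    qed
    have tl: "(sum \<mu> \<longlongrightarrow> 1) (finite_subsets_at_top UNIV)" using hs by (simp add: has_sum_def)
    have "\<forall>\<^sub>F X in finite_subsets_at_top UNIV. dist (sum \<mu> X) 1 < 1/8"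
      by (rule tendstoD[OF tl]) simp
    then have "\<exists>X. finite X \<and> X \<subseteq> UNIV \<and> (\<forall>Y. finite Y \<and> X \<subseteq> Y \<and> Y \<subseteq> UNIV \<longrightarrow> dist (sum \<mu> Y) 1 < 1/8)"
      by (simp only: eventually_finite_subsets_at_top)
    then obtain X0 where X0a: "finite X0" and
      X0b: "\<forall>Y. finite Y \<and> X0 \<subseteq> Y \<and> Y \<subseteq> UNIV \<longrightarrow> dist (sum \<mu> Y) 1 < 1/8"
      by (elim exE conjE)
    have X0: "finite X0" "\<And>Y. finite Y \<Longrightarrow> X0 \<subseteq> Y \<Longrightarrow> dist (sum \<mu> Y) 1 < 1/8"
      using X0a X0b by simp_all
    define Y where "Y = X0 \<union> B"
    have Yfin: "finite Y" using X0(1) Bfin by (simp add: Y_def)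
    have "dist (sum \<mu> Y) 1 < 1/8" using X0(2)[OF Yfin] by (simp add: Y_def)
    then have Y78: "7/8 < sum \<mu> Y" using abs_less_iff[of "sum \<mu> Y - 1" "1/8"] unfolding dist_real_def by linarith
    have "sum \<mu> Y = sum \<mu> (Y - B) + sum \<mu> B" using Yfin by (intro sum.subset_diff) (auto simp: Y_def)
    moreover have "sum \<mu> (Y - B) \<le> 1/8" using Yfin by (intro tail) auto
    ultimately have B34: "3/4 < sum \<mu> B" using Y78 by simp
    have "sum \<mu> B = \<mu> 0 + sum \<mu> (B - {0})" using Bfin B0 by (simp add: sum.remove)
    show "1/4 \<le> \<mu> 0 \<or> (\<exists>g0. g0 \<noteq> 0 \<and> \<delta> \<le> \<mu> g0)"
    proof (rule ccontr)
      assume "\<not> (1/4 \<le> \<mu> 0 \<or> (\<exists>g0. g0 \<noteq> 0 \<and> \<delta> \<le> \<mu> g0))"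
      then have a: "\<mu> 0 < 1/4" and b: "\<And>g. g \<noteq> 0 \<Longrightarrow> \<mu> g < \<delta>" by auto
      have "sum \<mu> (B - {0}) \<le> real (card (B - {0})) * \<delta>"
        by (rule sum_bounded_above) (use b less_imp_le in auto)
      also have "\<dots> \<le> real (card B) * \<delta>"
        using d0 Bfin by (intro mult_right_mono) (auto intro: card_mono)
      also have "\<dots> = 1/4" using cB by (simp add: \<delta>_def)
      finally show False using B34 a \<open>sum \<mu> B = \<mu> 0 + sum \<mu> (B - {0})\<close> by simp
    qed
  qed
qed

theorem proposition2:
  fixes S :: "'a::group_add set" and c k :: real
  assumes "finite S" and "generates S"
    and "\<And>n::nat. 0 < n \<Longrightarrow> real (card (ball_cay S n)) < c * real n powr k"
  shows "pdim S \<le> ereal k"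
proof -
  have cU: "countable (UNIV :: 'a set)" by (rule countable_UNIV_gen[OF assms(1,2)])
  show ?thesis unfolding pdim_def
  proof (rule Sup_least)
    fix x assume "x \<in> {ereal s |s. 0 < s \<and> (\<exists>b>0. (INF \<mu>\<in>M_sb S s b. lambda_c \<mu>) = 1)}"
    then obtain s b where x: "x = ereal s" and s0: "0 < s" and b0: "0 < b"
      and inf1: "(INF \<mu>\<in>M_sb S s b. lambda_c \<mu>) = 1" by blast
    show "x \<le> ereal k"
    proof (rule ccontr)
      assume nx: "\<not> x \<le> ereal k"
      have sk: "k < s"
      proof (rule ccontr)
        assume "\<not> k < s"
        then have "s \<le> k" by simp
        then have "ereal s \<le> ereal k" by (simp only: ereal_less_eq(3))
        then show False using nx x by simp
      qed
      have conc: "\<exists>\<delta>>0. \<forall>\<mu>\<in>M_sb S s b. 1/4 \<le> \<mu> 0 \<or> (\<exists>g0. g0 \<noteq> 0 \<and> \<delta> \<le> \<mu> g0)"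
        by (rule concentration[OF assms(1) assms(2) _ sk s0 b0]) (rule assms(3))
      from conc obtain \<delta> where d0: "0 < \<delta>"
        and altb: "\<forall>\<mu>\<in>M_sb S s b. 1/4 \<le> \<mu> 0 \<or> (\<exists>g0. g0 \<noteq> 0 \<and> \<delta> \<le> \<mu> g0)"
        by (elim exE conjE)
      have alt: "1/4 \<le> \<mu> 0 \<or> (\<exists>g0. g0 \<noteq> 0 \<and> \<delta> \<le> \<mu> g0)" if "\<mu> \<in> M_sb S s b" for \<mu>
        by (rule bspec[OF altb that])
      define \<epsilon> where "\<epsilon> = min (1/4) ((\<delta> - 1 + exp (- \<delta>)) / 2)"
      have e0: "0 < \<epsilon>" using exp_minus_greater[of \<delta>] d0 by (simp add: \<epsilon>_def)
      have "ereal (1 + \<epsilon>) \<le> (INF \<mu>\<in>M_sb S s b. lambda_c \<mu>)"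
      proof (rule INF_greatest)
        fix \<mu> assume m: "\<mu> \<in> M_sb S s b"
        then have sp: "sym_prob \<mu>" by (simp add: M_sb_def)
        show "ereal (1 + \<epsilon>) \<le> lambda_c \<mu>"
          unfolding \<epsilon>_def by (rule lambda_c_lower[OF cU sp d0 alt[OF m]])
      qed
      then show False using inf1 e0 by simp
    qed
  qed
qed

end
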